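(* Let $I\subset\mathbb{R}$ be an open interval and $\lambda:I\to\mathbb{R}$ a non-constant positive smooth function, and fix a choice of sign $\pm$. Let $\tilde M(1-\lambda^2,2(1\pm\lambda))$ be the contact metric $3$-manifold described in the context. For constants $b\in\mathbb{R}$ and $c\in I$, consider the curve $\gamma_{\{b,c\}}(s)=(b,s,c)$ in $\tilde M(1-\lambda^2,2(1\pm\lambda))$ (it is parametrized by arclength, is a Legendre curve, and its unit tangent is $e_2$). Then $\gamma_{\{b,c\}}$ is proper biharmonic if and only if $\lambda'(c)\neq 0$ and $$\Big(\lambda\lambda''-2(\lambda')^2-8\lambda^2(1\pm\lambda)\Big)\Big|_{z=c}=0,$$ where $'$ denotes $d/dz$ and the sign $\pm$ is the same as the one in $\tilde M(1-\lambda^2,2(1\pm\lambda))$.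
   Context: Definition of $\tilde M(1-\lambda^2,2(1\pm\lambda))$: Let $\lambda:I\to\mathbb{R}$ be a non-constant positive smooth function on an open interval $I$, $\lambda'=d\lambda/dz$. On $\tilde M^3=\mathbb{R}^2\times I\subset\mathbb{R}^3$ with coordinates $(x,y,z)$ consider the vector fields $e_1=\partial_x$, $e_2=\partial_y$, $e_3=(\pm 2y+f(z))\partial_x+\big(2\lambda x-\frac{\lambda'}{2\lambda}y+h(z)\big)\partial_y+\partial_z$, where $f,h$ are arbitrary smooth functions of $z$. Let $g$ be the Riemannian metric with $g(e_i,e_j)=\delta_{ij}$, $\xi=e_1$, $\eta$ the $1$-form dual to $e_1$, and $\phi$ the $(1,1)$-tensor with $\phi e_1=0$, $\phi e_2=\pm e_3$, $\phi e_3=\mp e_2$ (all double signs correspond to the sign in $\pm 2y$). This is a contact metric manifold which is a generalized $(\kappa,\mu)$-manifold with $\kappa=1-\lambda^2$, $\mu=2(1\pm\lambda)$, i.e. its curvature tensor $\tilde R(X,Y)=[\tilde\nabla_X,\tilde\nabla_Y]-\tilde\nabla_{[X,Y]}$ satisfies $\tilde R(X,Y)\xi=(\kappa I+\mu h)(\eta(Y)X-\eta(X)Y)$, where $2h$ is the Lie derivative of $\phi$ along $\xi$. A curve parametrized by arclength in a contact metric $3$-manifold is Legendre if $\eta(\gamma')=0$. A smooth map $f:M\to\tilde M$ is biharmonic if its bitension field $\tau_2(f)=-\Delta_f\tau(f)+\mathrm{trace}\,\tilde R(\tau(f),df)df$ vanishes, where $\tau(f)$ is the tension field and $\Delta_f=-\mathrm{trace}(\nabla^f\nabla^f-\nabla^f_\nabla)$;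 an isometric immersion is biharmonic if it is a biharmonic map, and proper biharmonic if it is biharmonic and not minimal (for a curve: not a geodesic). For a curve parametrized by arclength with unit tangent $T$, biharmonicity is $\tilde\nabla_T\tilde\nabla_T\tilde\nabla_T T+\tilde R(\tilde\nabla_T T,T)T=0$. *)

theory Defs
  imports "HOL-Analysis.Analysis"
begin

definition smooth_on :: "real set \<Rightarrow> (real \<Rightarrow> real) \<Rightarrow> bool" where
  "smooth_on S f \<longleftrightarrow> (\<forall>n. \<forall>x\<in>S. ((deriv ^^ n) f) differentiable (at x))"

definition pd :: "'n::finite \<Rightarrow> (real^'n \<Rightarrow> real) \<Rightarrow> real^'n \<Rightarrow> real" where
  "pd i F p = deriv (\<lambda>t. F (p + t *\<^sub>R axis i 1)) 0"

(* A Riemannian metric in coordinates: G p $ i $ j = g(d_i, d_j) at p.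
   Christoffel symbols Gamma^k_{ij} of the Levi-Civita connection. *)
definition christoffel :: "(real^'n \<Rightarrow> real^'n^'n) \<Rightarrow> 'n::finite \<Rightarrow> 'n \<Rightarrow> 'n \<Rightarrow> real^'n \<Rightarrow> real" where
  "christoffel G k i j p =
     (\<Sum>l\<in>UNIV. matrix_inv (G p) $ k $ l *
        (pd i (\<lambda>q. G q $ j $ l) p + pd j (\<lambda>q. G q $ i $ l) p - pd l (\<lambda>q. G q $ i $ j) p)) / 2"

(* Riemann curvature R(X,Y)Z = [nabla_X,nabla_Y]Z - nabla_[X,Y] Z at p, in coordinates:
   R(d_i,d_j)d_k = R^l_{ijk} d_l. *)
definition riem :: "(real^'n \<Rightarrow> real^'n^'n) \<Rightarrow> real^'n \<Rightarrow> real^'n \<Rightarrow> real^'n \<Rightarrow> real^'n::finite \<Rightarrow> real^'n" where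
  "riem G X Y Z p = (\<chi> l. \<Sum>i\<in>UNIV. \<Sum>j\<in>UNIV. \<Sum>k\<in>UNIV. X $ i * Y $ j * Z $ k *
      (pd i (christoffel G l j k) p - pd j (christoffel G l i k) p
       + (\<Sum>m\<in>UNIV. christoffel G l i m p * christoffel G m j k p
                    - christoffel G l j m p * christoffel G m i k p)))"

definition velocity :: "(real \<Rightarrow> real^'n::finite) \<Rightarrow> real \<Rightarrow> real^'n" where
  "velocity \<gamma> t = (\<chi> i. deriv (\<lambda>s. \<gamma> s $ i) t)"

definition cov_along :: "(real^'n \<Rightarrow> real^'n^'n) \<Rightarrow> (real \<Rightarrow> real^'n::finite) \<Rightarrow> (real \<Rightarrow> real^'n) \<Rightarrow> real \<Rightarrow> real^'n" where
  "cov_along G \<gamma> V t = (\<chi> k. deriv (\<lambda>s. V s $ k) t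
      + (\<Sum>i\<in>UNIV. \<Sum>j\<in>UNIV. christoffel G k i j (\<gamma> t) * velocity \<gamma> t $ i * V t $ j))"

definition tension_curve :: "(real^'n \<Rightarrow> real^'n^'n) \<Rightarrow> (real \<Rightarrow> real^'n::finite) \<Rightarrow> real \<Rightarrow> real^'n" where
  "tension_curve G \<gamma> = cov_along G \<gamma> (velocity \<gamma>)"

definition geodesic_curve :: "(real^'n \<Rightarrow> real^'n^'n) \<Rightarrow> (real \<Rightarrow> real^'n::finite) \<Rightarrow> bool" where
  "geodesic_curve G \<gamma> \<longleftrightarrow> (\<forall>s. tension_curve G \<gamma> s = 0)"

(* Biharmonic equation for a curve parametrized by arclength:
   nabla_T nabla_T nabla_T T + R(nabla_T T, T) T = 0. *)
definition biharmonic_curve :: "(real^'n \<Rightarrow> real^'n^'n) \<Rightarrow> (real \<Rightarrow> real^'n::finite) \<Rightarrow> bool" where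
  "biharmonic_curve G \<gamma> \<longleftrightarrow>
     (\<forall>s. cov_along G \<gamma> (cov_along G \<gamma> (tension_curve G \<gamma>)) s
          + riem G (tension_curve G \<gamma> s) (velocity \<gamma> s) (velocity \<gamma> s) (\<gamma> s) = 0)"

definition proper_biharmonic_curve :: "(real^'n \<Rightarrow> real^'n^'n) \<Rightarrow> (real \<Rightarrow> real^'n::finite) \<Rightarrow> bool" where
  "proper_biharmonic_curve G \<gamma> \<longleftrightarrow> biharmonic_curve G \<gamma> \<and> \<not> geodesic_curve G \<gamma>"

(* Metric making a frame E orthonormal: E p $ i $ j = i-th coordinate component of e_j(p).
   g_{ij} = g(d_i,d_j) = (E^{-1})^T E^{-1}. *)
definition frame_metric :: "(real^'n \<Rightarrow> real^'n^'n) \<Rightarrow> real^'n::finite \<Rightarrow> real^'n^'n" where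
  "frame_metric E p = transpose (matrix_inv (E p)) ** matrix_inv (E p)"

(* The frame e1 = d_x, e2 = d_y,
   e3 = (eps*2y + f z) d_x + (2 lam(z) x - lam'(z)/(2 lam(z)) y + h z) d_y + d_z,
   where eps = 1 or -1 encodes the sign +-. Coordinates: p$1 = x, p$2 = y, p$3 = z. *)
definition Mframe :: "(real \<Rightarrow> real) \<Rightarrow> (real \<Rightarrow> real) \<Rightarrow> (real \<Rightarrow> real) \<Rightarrow> real \<Rightarrow> real^3 \<Rightarrow> real^3^3" where
  "Mframe lam f h eps p =
     (let x = p $ 1; y = p $ 2; z = p $ 3 in
      vector [vector [1, 0, eps * 2 * y + f z],
              vector [0, 1, 2 * lam z * x - deriv lam z / (2 * lam z) * y + h z],
              vector [0, 0, 1]])"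

definition Mmetric :: "(real \<Rightarrow> real) \<Rightarrow> (real \<Rightarrow> real) \<Rightarrow> (real \<Rightarrow> real) \<Rightarrow> real \<Rightarrow> real^3 \<Rightarrow> real^3^3" where
  "Mmetric lam f h eps = frame_metric (Mframe lam f h eps)"

end

theory Submission
  imports Defs
begin


lemma matrix_inv_eq:
  fixes A B :: "real^'n^'n"
  assumes "A ** B = mat 1" "B ** A = mat 1"
  shows "matrix_inv A = B"
proof -
  have ex: "\<exists>A'. A ** A' = mat 1 \<and> A' ** A = mat 1" using assms by blast
  define C where "C = matrix_inv A"
  have C: "A ** C = mat 1" "C ** A = mat 1"
    using someI_ex[OF ex] unfolding C_def matrix_inv_def by auto
  have "C = C ** (A ** B)" by (simp add: assms)
  also have "\<dots> = (C ** A) ** B" by (simp add: matrix_mul_assoc)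
  also have "\<dots> = B" by (simp add: C)
  finally show ?thesis unfolding C_def .
qed

definition mf :: "(real \<Rightarrow> real) \<Rightarrow> real \<Rightarrow> real" where
  "mf lam z = deriv lam z / (2 * lam z)"
definition Av :: "real \<Rightarrow> (real \<Rightarrow> real) \<Rightarrow> real^3 \<Rightarrow> real" where
  "Av eps f q = eps * 2 * q$2 + f (q$3)"
definition Bv :: "(real \<Rightarrow> real) \<Rightarrow> (real \<Rightarrow> real) \<Rightarrow> real^3 \<Rightarrow> real" where
  "Bv lam h q = 2 * lam (q$3) * q$1 - mf lam (q$3) * q$2 + h (q$3)"

definition Gm :: "real \<Rightarrow> real \<Rightarrow> real^3^3" where
  "Gm a b = vector [vector [1, 0, -a], vector [0, 1, -b], vector [-a, -b, 1 + a^2 + b^2]]"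
definition Gi :: "real \<Rightarrow> real \<Rightarrow> real^3^3" where
  "Gi a b = vector [vector [1 + a^2, a*b, a], vector [a*b, 1 + b^2, b], vector [a, b, 1]]"

lemma Mframe_eq: "Mframe lam f h eps q = vector [vector [1, 0, Av eps f q], vector [0, 1, Bv lam h q], vector [0, 0, 1]]"
  unfolding Mframe_def Av_def Bv_def mf_def Let_def by simp

lemma inv3: "matrix_inv (vector [vector [1, 0, a], vector [0, 1, b], vector [0, 0, 1]] :: real^3^3)
   = vector [vector [1, 0, -a], vector [0, 1, -b], vector [0, 0, 1]]"
  by (rule matrix_inv_eq) (simp_all add: matrix_matrix_mult_def vec_eq_iff forall_3 sum_3 mat_def)

lemma Mmetric_eq: "Mmetric lam f h eps = (\<lambda>q. Gm (Av eps f q) (Bv lam h q))"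
  apply (rule ext)
  unfolding Mmetric_def frame_metric_def Mframe_eq inv3
  by (simp add: Gm_def matrix_matrix_mult_def vec_eq_iff forall_3 sum_3 transpose_def power2_eq_square)

lemma Gi_eq: "matrix_inv (Gm a b) = Gi a b"
  by (rule matrix_inv_eq) (simp_all add: Gm_def Gi_def matrix_matrix_mult_def vec_eq_iff forall_3 sum_3 mat_def algebra_simps power2_eq_square)



lemma pd_frechet:
  assumes "(F has_derivative F') (at q)"
  shows "pd i F q = F' (axis i 1)"
proof -
  have l: "linear F'" using assms has_derivative_linear by blast
  have h1: "((\<lambda>t::real. q + t *\<^sub>R axis i 1) has_derivative (\<lambda>t. t *\<^sub>R axis i 1)) (at 0)"
    by (auto intro!: derivative_eq_intros)
  have "((\<lambda>t. F (q + t *\<^sub>R axis i 1)) has_derivative (\<lambda>t. F' (t *\<^sub>R axis i 1))) (at 0)"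
    using has_derivative_compose[OF h1] assms by simp
  moreover have "(\<lambda>t. F' (t *\<^sub>R axis i 1)) = (\<lambda>t. F' (axis i 1) * t)"
    using linear_scale[OF l] by (auto simp: mult.commute)
  ultimately have "((\<lambda>t. F (q + t *\<^sub>R axis i 1)) has_real_derivative F' (axis i 1)) (at 0)"
    by (simp add: has_field_derivative_def)
  then show ?thesis unfolding pd_def by (rule DERIV_imp_deriv)
qed

lemma hd_nth: "((\<lambda>q::real^'n. q $ i) has_derivative (\<lambda>v. v $ i)) F"
  by (rule bounded_linear_imp_has_derivative) (rule bounded_linear_vec_nth)

lemma hd_comp3:
  assumes "(g has_real_derivative D) (at (q$i))"
  shows "((\<lambda>q::real^'n. g (q$i)) has_derivative (\<lambda>v. D * v$i)) (at q)"
  using has_derivative_compose[OF hd_nth[of i "at q"], of g "(*) D"] assms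
  by (simp add: has_field_derivative_def)

definition dAv :: "real \<Rightarrow> (real \<Rightarrow> real) \<Rightarrow> real^3 \<Rightarrow> real^3 \<Rightarrow> real" where
  "dAv eps f q v = eps * 2 * v$2 + deriv f (q$3) * v$3"
definition dBv :: "(real \<Rightarrow> real) \<Rightarrow> (real \<Rightarrow> real) \<Rightarrow> real^3 \<Rightarrow> real^3 \<Rightarrow> real" where
  "dBv lam h q v = 2 * (deriv lam (q$3) * v$3 * q$1 + lam (q$3) * v$1)
     - (deriv (mf lam) (q$3) * v$3 * q$2 + mf lam (q$3) * v$2) + deriv h (q$3) * v$3"

definition dGm :: "real \<Rightarrow> real \<Rightarrow> real \<Rightarrow> real \<Rightarrow> real^3^3" where
  "dGm a b da db = vector [vector [0, 0, -da], vector [0, 0, -db], vector [-da, -db, 2*a*da + 2*b*db]]"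

lemma smooth_diff:
  assumes "smooth_on I g" "z \<in> I"
  shows "(g has_real_derivative deriv g z) (at z)" "(deriv g has_real_derivative deriv (deriv g) z) (at z)"
proof -
  have "((deriv ^^ 0) g) differentiable (at z)" "((deriv ^^ 1) g) differentiable (at z)"
    using assms unfolding smooth_on_def by blast+
  then show "(g has_real_derivative deriv g z) (at z)" "(deriv g has_real_derivative deriv (deriv g) z) (at z)"
    by (simp_all add: DERIV_deriv_iff_real_differentiable)
qed

lemma mf_diff:
  assumes "smooth_on I lam" "z \<in> I" "lam z > 0"
  shows "(mf lam has_real_derivative deriv (mf lam) z) (at z)"
proof -
  have "mf lam = (\<lambda>z. deriv lam z / (2 * lam z))" by (auto simp: mf_def)
  moreover have "(\<lambda>z. deriv lam z / (2 * lam z)) differentiable (at z)"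
    using smooth_diff[OF assms(1,2)] assms(3)
    by (intro derivative_intros differentiable_divide) (auto simp: real_differentiable_def)
  ultimately show ?thesis by (simp add: DERIV_deriv_iff_real_differentiable)
qed

lemma hd_Av:
  assumes "smooth_on I f" "q$3 \<in> I"
  shows "(Av eps f has_derivative dAv eps f q) (at q)"
proof -
  have "((\<lambda>q. eps * 2 * q$2 + f (q$3)) has_derivative (\<lambda>v. eps * 2 * v$2 + deriv f (q$3) * v$3)) (at q)"
    by (intro derivative_intros hd_nth hd_comp3 smooth_diff[OF assms])
  then show ?thesis unfolding Av_def[abs_def] dAv_def[abs_def] .
qed

lemma hd_Bv:
  assumes "smooth_on I lam" "smooth_on I h" "q$3 \<in> I" "lam (q$3) > 0"
  shows "(Bv lam h has_derivative dBv lam h q) (at q)"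
proof -
  have "((\<lambda>q. 2 * lam (q$3) * q$1 - mf lam (q$3) * q$2 + h (q$3)) has_derivative
     (\<lambda>v. 2 * lam (q$3) * v$1 + (2 * (deriv lam (q$3) * v$3)) * q$1
        - (mf lam (q$3) * v$2 + deriv (mf lam) (q$3) * v$3 * q$2) + deriv h (q$3) * v$3)) (at q)"
    by (intro derivative_eq_intros)
       (auto intro!: hd_nth hd_comp3 smooth_diff[OF assms(1,3)] smooth_diff[OF assms(2,3)]
         mf_diff[OF assms(1,3,4)])
  then show ?thesis unfolding Bv_def[abs_def] dBv_def[abs_def]
    by (simp add: algebra_simps)
qed



lemma hd_Gm:
  assumes "(a has_derivative da) (at q)" "(b has_derivative db) (at q)"
  shows "((\<lambda>q. Gm (a q) (b q) $ j $ l) has_derivative (\<lambda>v. dGm (a q) (b q) (da v) (db v) $ j $ l)) (at q)"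
proof -
  have j: "j = 1 \<or> j = 2 \<or> j = 3" and l: "l = 1 \<or> l = 2 \<or> l = 3" using exhaust_3 by auto
  have m1: "((\<lambda>q. - a q) has_derivative (\<lambda>v. - da v)) (at q)" by (rule has_derivative_minus[OF assms(1)])
  have m2: "((\<lambda>q. - b q) has_derivative (\<lambda>v. - db v)) (at q)" by (rule has_derivative_minus[OF assms(2)])
  have c: "((\<lambda>q. c) has_derivative (\<lambda>v. 0)) (at q)" for c :: real by simp
  have s: "((\<lambda>q. 1 + (a q)^2 + (b q)^2) has_derivative (\<lambda>v. 2*a q*da v + 2*b q*db v)) (at q)"
    using assms by (auto intro!: derivative_eq_intros)
  show ?thesis using j l
    by (elim disjE) (simp_all add: Gm_def dGm_def m1 m2 c s)
qed

definition Bzv :: "(real \<Rightarrow> real) \<Rightarrow> (real \<Rightarrow> real) \<Rightarrow> real^3 \<Rightarrow> real" where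
  "Bzv lam h q = 2 * deriv lam (q$3) * q$1 - deriv (mf lam) (q$3) * q$2 + deriv h (q$3)"

definition CHg :: "real \<Rightarrow> real \<Rightarrow> real^3 \<Rightarrow> real^3 \<Rightarrow> 3 \<Rightarrow> 3 \<Rightarrow> 3 \<Rightarrow> real" where
  "CHg a b da db k i j = (\<Sum>l\<in>UNIV. Gi a b $ k $ l *
      (dGm a b (da$i) (db$i) $ j $ l + dGm a b (da$j) (db$j) $ i $ l - dGm a b (da$l) (db$l) $ i $ j)) / 2"

lemma dAv_axis: "dAv eps f q (axis i 1) = vector [0, eps*2, deriv f (q$3)] $ i"
  using exhaust_3[of i] by (auto simp: dAv_def axis_def)

lemma dBv_axis: "dBv lam h q (axis i 1) = vector [2 * lam (q$3), - mf lam (q$3), Bzv lam h q] $ i"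
  using exhaust_3[of i] by (auto simp: dBv_def axis_def Bzv_def algebra_simps)

lemma christoffel_eq:
  assumes "smooth_on I lam" "smooth_on I f" "smooth_on I h" "q$3 \<in> I" "lam (q$3) > 0"
  shows "christoffel (Mmetric lam f h eps) k i j q =
    CHg (Av eps f q) (Bv lam h q) (vector [0, eps*2, deriv f (q$3)])
        (vector [2 * lam (q$3), - mf lam (q$3), Bzv lam h q]) k i j"
proof -
  have hd: "\<And>j l. ((\<lambda>q. Gm (Av eps f q) (Bv lam h q) $ j $ l) has_derivative
     (\<lambda>v. dGm (Av eps f q) (Bv lam h q) (dAv eps f q v) (dBv lam h q v) $ j $ l)) (at q)"
    by (rule hd_Gm[OF hd_Av[OF assms(2,4)] hd_Bv[OF assms(1,3,4,5)]])
  show ?thesis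
    unfolding christoffel_def Mmetric_eq Gi_eq CHg_def pd_frechet[OF hd] dAv_axis dBv_axis ..
qed

definition DGi :: "real \<Rightarrow> real \<Rightarrow> real \<Rightarrow> real \<Rightarrow> real^3^3" where
  "DGi a b \<alpha> \<beta> = vector [vector [2*a*\<alpha>, \<alpha>*b + a*\<beta>, \<alpha>], vector [\<alpha>*b + a*\<beta>, 2*b*\<beta>, \<beta>], vector [\<alpha>, \<beta>, 0]]"
definition DdGm :: "real \<Rightarrow> real \<Rightarrow> real \<Rightarrow> real \<Rightarrow> real \<Rightarrow> real \<Rightarrow> real \<Rightarrow> real \<Rightarrow> real^3^3" where
  "DdGm a b \<alpha> \<beta> da db u w = vector [vector [0, 0, -u], vector [0, 0, -w],
      vector [-u, -w, 2*(\<alpha>*da + a*u) + 2*(\<beta>*db + b*w)]]"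

definition DCHg :: "real \<Rightarrow> real \<Rightarrow> real \<Rightarrow> real \<Rightarrow> real^3 \<Rightarrow> real^3 \<Rightarrow> real^3 \<Rightarrow> real^3 \<Rightarrow> 3 \<Rightarrow> 3 \<Rightarrow> 3 \<Rightarrow> real" where
  "DCHg a b \<alpha> \<beta> da db u w k i j = (\<Sum>l\<in>UNIV.
      DGi a b \<alpha> \<beta> $ k $ l *
      (dGm a b (da$i) (db$i) $ j $ l + dGm a b (da$j) (db$j) $ i $ l - dGm a b (da$l) (db$l) $ i $ j)
    + Gi a b $ k $ l *
      (DdGm a b \<alpha> \<beta> (da$i) (db$i) (u$i) (w$i) $ j $ l + DdGm a b \<alpha> \<beta> (da$j) (db$j) (u$j) (w$j) $ i $ l
        - DdGm a b \<alpha> \<beta> (da$l) (db$l) (u$l) (w$l) $ i $ j)) / 2"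

lemma DGi_entry: "((\<lambda>t. Gi (a + \<alpha>*t) (b + \<beta>*t) $ k $ l) has_real_derivative DGi a b \<alpha> \<beta> $ k $ l) (at 0)"
proof -
  have k: "k = 1 \<or> k = 2 \<or> k = 3" and l: "l = 1 \<or> l = 2 \<or> l = 3" using exhaust_3 by auto
  show ?thesis using k l
    apply (elim disjE)
    apply (simp_all add: Gi_def DGi_def)
    apply (auto intro!: derivative_eq_intros simp: algebra_simps)
    done
qed

lemma DdGm_entry: "((\<lambda>t. dGm (a + \<alpha>*t) (b + \<beta>*t) (da + t*u) (db + t*w) $ k $ l) has_real_derivative DdGm a b \<alpha> \<beta> da db u w $ k $ l) (at 0)"
proof -
  have k: "k = 1 \<or> k = 2 \<or> k = 3" and l: "l = 1 \<or> l = 2 \<or> l = 3" using exhaust_3 by auto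
  show ?thesis using k l
    apply (elim disjE)
    apply (simp_all add: dGm_def DdGm_def)
    apply (auto intro!: derivative_eq_intros simp: algebra_simps)
    done
qed

lemma DCHg_deriv: "((\<lambda>t. CHg (a + \<alpha>*t) (b + \<beta>*t) (da + t *\<^sub>R u) (db + t *\<^sub>R w) k i j) has_real_derivative
    DCHg a b \<alpha> \<beta> da db u w k i j) (at 0)"
proof -
  have e: "((\<lambda>t. dGm (a + \<alpha>*t) (b + \<beta>*t) ((da + t *\<^sub>R u)$p) ((db + t *\<^sub>R w)$p) $ j $ l) has_real_derivative
      DdGm a b \<alpha> \<beta> (da$p) (db$p) (u$p) (w$p) $ j $ l) (at 0)" for p j l
    using DdGm_entry[of a \<alpha> b \<beta> "da$p" "u$p" "db$p" "w$p" j l] by (simp add: mult.commute)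
  have "((\<lambda>t. (\<Sum>l\<in>UNIV. Gi (a + \<alpha>*t) (b + \<beta>*t) $ k $ l *
      (dGm (a + \<alpha>*t) (b + \<beta>*t) ((da + t *\<^sub>R u)$i) ((db + t *\<^sub>R w)$i) $ j $ l
       + dGm (a + \<alpha>*t) (b + \<beta>*t) ((da + t *\<^sub>R u)$j) ((db + t *\<^sub>R w)$j) $ i $ l
       - dGm (a + \<alpha>*t) (b + \<beta>*t) ((da + t *\<^sub>R u)$l) ((db + t *\<^sub>R w)$l) $ i $ j)) / 2)
     has_real_derivative DCHg a b \<alpha> \<beta> da db u w k i j) (at 0)"
    unfolding DCHg_def
    apply (rule DERIV_cdivide)
    apply (rule DERIV_sum)
    apply (rule DERIV_mult'[THEN DERIV_cong])
      apply (rule DGi_entry)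
     apply (rule DERIV_diff DERIV_add e)+
    apply (simp add: algebra_simps)
    done
  then show ?thesis unfolding CHg_def .
qed



lemma velocity_curve: "velocity (\<lambda>s. vector [b0, s, c] :: real^3) = (\<lambda>s. vector [0, 1, 0])"
  by (rule ext) (simp add: velocity_def vec_eq_iff forall_3)

lemma deriv_l1: "deriv (\<lambda>s. u * (v * s + w)) x = u * (v::real)"
  by (rule DERIV_imp_deriv) (auto intro!: derivative_eq_intros)
lemma deriv_l2: "deriv (\<lambda>s. u * (w - v * s + z)) x = - u * (v::real)"
  by (rule DERIV_imp_deriv) (auto intro!: derivative_eq_intros)
lemma deriv_c: "deriv (\<lambda>s. u) x = (0::real)"
  by simp

locale bihloc =
  fixes I :: "real set" and lam f h :: "real \<Rightarrow> real" and eps b0 c :: real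
  assumes sl: "smooth_on I lam" and sf: "smooth_on I f" and sh: "smooth_on I h"
    and cI: "c \<in> I" and lpos: "\<forall>z\<in>I. lam z > 0" and eps: "eps = 1 \<or> eps = -1" and oI: "open I"
begin

lemma lc: "lam c > 0" using lpos cI by auto


lemma e2: "eps * eps = 1" using eps by auto

abbreviation "\<gamma> \<equiv> (\<lambda>s. vector [b0, s, c] :: real^3)"
abbreviation "G \<equiv> Mmetric lam f h eps"

lemma ch_curve: "christoffel G k i j (\<gamma> s) =
    CHg (eps * 2 * s + f c) (2 * lam c * b0 - mf lam c * s + h c) (vector [0, eps*2, deriv f c])
        (vector [2 * lam c, - mf lam c, 2 * deriv lam c * b0 - deriv (mf lam) c * s + deriv h c]) k i j"
  using christoffel_eq[OF sl sf sh, of "\<gamma> s"] cI lc by (simp add: Av_def Bv_def Bzv_def)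

lemma tension_eq: "tension_curve G \<gamma> = (\<lambda>s. vector [mf lam c * (eps * 2 * s + f c),
     mf lam c * (2 * lam c * b0 - mf lam c * s + h c), mf lam c])"
  apply (rule ext)
  apply (simp add: tension_curve_def cov_along_def velocity_curve ch_curve vec_eq_iff forall_3 sum_3)
  apply (simp add: CHg_def sum_3 Gi_def dGm_def)
  done

lemma cov1: "cov_along G \<gamma> (tension_curve G \<gamma>) = (\<lambda>s. vector [mf lam c * (lam c + eps), - mf lam c * mf lam c, 0])"
  apply (rule ext)
  apply (simp add: cov_along_def tension_eq velocity_curve ch_curve vec_eq_iff forall_3 sum_3 deriv_l1 deriv_l2)
  apply (simp add: CHg_def sum_3 Gi_def dGm_def)
  using eps apply (elim disjE; simp add: field_simps power2_eq_square)
  done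

lemma cov2: "cov_along G \<gamma> (cov_along G \<gamma> (tension_curve G \<gamma>)) = (\<lambda>s.
   (- mf lam c * ((lam c + eps)^2 + mf lam c ^ 2)) *\<^sub>R vector [eps * 2 * s + f c, 2 * lam c * b0 - mf lam c * s + h c, 1])"
  apply (rule ext)
  apply (simp add: cov1 cov_along_def velocity_curve ch_curve vec_eq_iff forall_3 sum_3)
  apply (simp add: CHg_def sum_3 Gi_def dGm_def)
  using eps apply (elim disjE; simp add: field_simps power2_eq_square)
  done

lemma P2: "pd 2 (christoffel G l i 2) (\<gamma> s) =
   DCHg (eps * 2 * s + f c) (2 * lam c * b0 - mf lam c * s + h c) (eps * 2) (- mf lam c)
     (vector [0, eps*2, deriv f c])
     (vector [2 * lam c, - mf lam c, 2 * deriv lam c * b0 - deriv (mf lam) c * s + deriv h c])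
     0 (vector [0, 0, - deriv (mf lam) c]) l i 2"
proof -
  have eq: "(\<lambda>t. christoffel G l i 2 (\<gamma> s + t *\<^sub>R axis 2 1)) =
    (\<lambda>t. CHg ((eps * 2 * s + f c) + (eps * 2) * t) ((2 * lam c * b0 - mf lam c * s + h c) + (- mf lam c) * t)
     (vector [0, eps*2, deriv f c] + t *\<^sub>R 0)
     (vector [2 * lam c, - mf lam c, 2 * deriv lam c * b0 - deriv (mf lam) c * s + deriv h c]
       + t *\<^sub>R vector [0, 0, - deriv (mf lam) c]) l i 2)"
  proof
    fix t
    have "\<gamma> s + t *\<^sub>R axis 2 1 = \<gamma> (s + t)"
      by (simp add: vec_eq_iff forall_3 axis_def)
    moreover have "vector [2 * lam c, - mf lam c, 2 * deriv lam c * b0 - deriv (mf lam) c * (s + t) + deriv h c]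
      = (vector [2 * lam c, - mf lam c, 2 * deriv lam c * b0 - deriv (mf lam) c * s + deriv h c]
       + t *\<^sub>R vector [0, 0, - deriv (mf lam) c] :: real^3)"
      by (simp add: vec_eq_iff forall_3 algebra_simps)
    ultimately show "christoffel G l i 2 (\<gamma> s + t *\<^sub>R axis 2 1) = CHg ((eps * 2 * s + f c) + (eps * 2) * t) ((2 * lam c * b0 - mf lam c * s + h c) + (- mf lam c) * t)
     (vector [0, eps*2, deriv f c] + t *\<^sub>R 0)
     (vector [2 * lam c, - mf lam c, 2 * deriv lam c * b0 - deriv (mf lam) c * s + deriv h c]
       + t *\<^sub>R vector [0, 0, - deriv (mf lam) c]) l i 2"
      using ch_curve[of l i 2 "s + t"] by (simp add: algebra_simps)
  qed
  show ?thesis unfolding pd_def eq by (rule DERIV_imp_deriv[OF DCHg_deriv])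
qed


lemma ch22: "q$3 \<in> I \<Longrightarrow> christoffel G l 2 2 q = mf lam (q$3) * vector [Av eps f q, Bv lam h q, 1] $ l"
  using exhaust_3[of l] christoffel_eq[OF sl sf sh, of q eps l 2 2] lpos
  by (auto simp: CHg_def sum_3 Gi_def dGm_def)

lemma hdF: fixes l :: 3 assumes "q$3 \<in> I"
  shows "((\<lambda>q. mf lam (q$3) * vector [Av eps f q, Bv lam h q, 1] $ l) has_derivative
    (\<lambda>v. deriv (mf lam) (q$3) * v$3 * vector [Av eps f q, Bv lam h q, 1] $ l
        + mf lam (q$3) * vector [dAv eps f q v, dBv lam h q v, 0] $ l)) (at q)"
proof -
  have m: "((\<lambda>q. mf lam (q$3)) has_derivative (\<lambda>v. deriv (mf lam) (q$3) * v$3)) (at q)"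
    using assms lpos by (intro hd_comp3 mf_diff[OF sl]) auto
  have a: "(Av eps f has_derivative dAv eps f q) (at q)" by (rule hd_Av[OF sf assms])
  have b: "(Bv lam h has_derivative dBv lam h q) (at q)" using assms lpos by (intro hd_Bv[OF sl sh]) auto
  have l: "l = 1 \<or> l = 2 \<or> l = 3" using exhaust_3 by auto
  show ?thesis using l
  proof (elim disjE)
    assume "l = 1" then show ?thesis
      using has_derivative_mult[OF m a] by (simp add: algebra_simps)
  next
    assume "l = 2" then show ?thesis
      using has_derivative_mult[OF m b] by (simp add: algebra_simps)
  next
    assume "l = 3" then show ?thesis using m by simp
  qed
qed

lemma P1: "pd i (christoffel G l 2 2) (\<gamma> s) =
   deriv (mf lam) c * axis i 1 $ 3 * vector [Av eps f (\<gamma> s), Bv lam h (\<gamma> s), 1] $ l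
        + mf lam c * vector [dAv eps f (\<gamma> s) (axis i 1), dBv lam h (\<gamma> s) (axis i 1), 0] $ l"
proof -
  have U: "open ((\<lambda>x::real^3. x $ 3) -` I)" by (rule open_vimage_vec_nth[OF oI])
  have "((christoffel G l 2 2) has_derivative
    (\<lambda>v. deriv (mf lam) ((\<gamma> s)$3) * v$3 * vector [Av eps f (\<gamma> s), Bv lam h (\<gamma> s), 1] $ l
        + mf lam ((\<gamma> s)$3) * vector [dAv eps f (\<gamma> s) v, dBv lam h (\<gamma> s) v, 0] $ l)) (at (\<gamma> s))"
    by (rule has_derivative_transform_within_open[OF hdF U]) (use cI ch22 in auto)
  from pd_frechet[OF this, of i] show ?thesis by simp
qed

lemma bih: "cov_along G \<gamma> (cov_along G \<gamma> (tension_curve G \<gamma>)) s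
   + riem G (tension_curve G \<gamma> s) (velocity \<gamma> s) (velocity \<gamma> s) (\<gamma> s)
   = (mf lam c * (deriv (mf lam) c - 2 * (mf lam c)^2 - 4 * eps * lam c - 4)) *\<^sub>R
       vector [eps * 2 * s + f c, 2 * lam c * b0 - mf lam c * s + h c, 1]"
  unfolding cov2
  apply (simp add: tension_eq velocity_curve riem_def vec_eq_iff forall_3 sum_3)
  apply (simp add: P1 P2 ch_curve)
  apply (simp add: DCHg_def CHg_def sum_3 DGi_def DdGm_def Gi_def dGm_def Av_def Bv_def dAv_def dBv_def axis_def)
  using eps apply (elim disjE; simp add: field_simps power2_eq_square)
  done

end

theorem proposition5p1:
  fixes I :: "real set" and lam f h :: "real \<Rightarrow> real" and eps b c :: real
  assumes "open I" and "is_interval I" and "I \<noteq> {}"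
    and "smooth_on I lam" and "\<forall>z\<in>I. lam z > 0" and "\<not> (\<exists>k. \<forall>z\<in>I. lam z = k)"
    and "smooth_on I f" and "smooth_on I h"
    and "eps = 1 \<or> eps = -1"
    and "c \<in> I"
  shows "proper_biharmonic_curve (Mmetric lam f h eps) (\<lambda>s. vector [b, s, c])
    \<longleftrightarrow> deriv lam c \<noteq> 0
        \<and> lam c * deriv (deriv lam) c - 2 * (deriv lam c)^2 - 8 * (lam c)^2 * (1 + eps * lam c) = 0"
proof -
  interpret bihloc I lam f h eps b c
    using assms by unfold_locales auto
  define L where "L = lam c"
  define L1 where "L1 = deriv lam c"
  define L2 where "L2 = deriv (deriv lam) c"
  have Lp: "L > 0" using lc L_def by simp
  have mfe: "mf lam c = L1 / (2 * L)" by (simp add: mf_def L_def L1_def)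
  have "(mf lam has_real_derivative (L2 * (2 * L) - L1 * (2 * L1)) / (2 * L)^2) (at c)"
  proof -
    have "mf lam = (\<lambda>z. deriv lam z / (2 * lam z))" by (auto simp: mf_def)
    moreover have "((\<lambda>z. deriv lam z / (2 * lam z)) has_real_derivative (L2 * (2 * L) - L1 * (2 * L1)) / (2 * L)^2) (at c)"
      using smooth_diff[OF sl cI] Lp unfolding L_def L1_def L2_def
      by (auto intro!: derivative_eq_intros simp: power2_eq_square)
    ultimately show ?thesis by simp
  qed
  then have dmf: "deriv (mf lam) c = (L2 * (2 * L) - L1 * (2 * L1)) / (2 * L)^2"
    by (rule DERIV_imp_deriv)
  define Q where "Q = deriv (mf lam) c - 2 * (mf lam c)^2 - 4 * eps * lam c - 4"
  have geo: "geodesic_curve G \<gamma> \<longleftrightarrow> mf lam c = 0"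
  proof
    assume "geodesic_curve G \<gamma>"
    then have "tension_curve G \<gamma> 0 $ 3 = 0" unfolding geodesic_curve_def by simp
    then show "mf lam c = 0" by (simp add: tension_eq)
  qed (simp add: geodesic_curve_def tension_eq vec_eq_iff forall_3)
  have bh: "biharmonic_curve G \<gamma> \<longleftrightarrow> mf lam c * Q = 0"
  proof
    assume "biharmonic_curve G \<gamma>"
    then have "(cov_along G \<gamma> (cov_along G \<gamma> (tension_curve G \<gamma>)) 0
      + riem G (tension_curve G \<gamma> 0) (velocity \<gamma> 0) (velocity \<gamma> 0) (\<gamma> 0)) $ 3 = 0"
      unfolding biharmonic_curve_def by simp
    then show "mf lam c * Q = 0" unfolding bih Q_def by simp
  next
    assume "mf lam c * Q = 0"
    then show "biharmonic_curve G \<gamma>" unfolding biharmonic_curve_def bih Q_def by simp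
  qed
  have Qe: "Q = (L * L2 - 2 * L1^2 - 8 * L^2 * (1 + eps * L)) / (2 * L^2)"
    unfolding Q_def dmf mfe L_def[symmetric] using Lp
    by (simp add: field_simps power2_eq_square)
  have m0: "mf lam c = 0 \<longleftrightarrow> L1 = 0" using Lp by (simp add: mfe)
  show ?thesis
    unfolding proper_biharmonic_curve_def geo bh m0 L_def[symmetric] L1_def[symmetric] L2_def[symmetric]
    using Lp by (auto simp: Qe mfe)
qed

end
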